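(* Let $t\in\mathbb{R}$, $\mu>0$, $\sigma>0$, $\lambda>0$ with $\lambda\ge(\mu-t)_-$. Let $\mathcal{L}_{S,\lambda}(\mu,\sigma)$ be the set of probability distributions $F$ on $\mathbb{R}$ such that, for $X\sim F$, $\mathbb{E}^F[X]=\mu$, $\mathbb{E}^F[X^2]=\mu^2+\sigma^2$, $F$ is symmetric, and $\mathbb{E}^F[(X-t)_-]\le\lambda$. Then $\mathcal{L}_{S,\lambda}(\mu,\sigma)$ is non-empty if and only if either $\lambda>(\mu-t)_-$, or $\lambda=(\mu-t)_-$ and $\sigma\le t-\mu$.
   Context: For $x\in\mathbb{R}$, $(x)_-=\max\{-x,0\}$. A distribution $F$ of a random variable $X$ is called symmetric if there exists $a\in\mathbb{R}$ with $\mathbb{P}(X-a>x)=\mathbb{P}(X-a<-x)$ for all $x\in\mathbb{R}$ under $F$. *)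

theory Defs
  imports "HOL-Probability.Probability"
begin

definition neg_part :: "real \<Rightarrow> real" where
  "neg_part x = max (- x) 0"

definition symmetric_distr :: "real measure \<Rightarrow> bool" where
  "symmetric_distr F \<longleftrightarrow>
     (\<exists>a. \<forall>x. measure F {y. y - a > x} = measure F {y. y - a < - x})"

definition L_S :: "real \<Rightarrow> real \<Rightarrow> real \<Rightarrow> real \<Rightarrow> real measure set" where
  "L_S t lam mu sig =
     {F. prob_space F \<and> sets F = sets borel \<and>
         integrable F (\<lambda>x. x) \<and> (\<integral>x. x \<partial>F) = mu \<and>
         integrable F (\<lambda>x. x ^ 2) \<and> (\<integral>x. x ^ 2 \<partial>F) = mu ^ 2 + sig ^ 2 \<and>
         symmetric_distr F \<and>
         integrable F (\<lambda>x. neg_part (x - t)) \<and> (\<integral>x. neg_part (x - t) \<partial>F) \<le> lam}"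

end

theory Submission
  imports Defs
begin

lemma three_point:
  fixes t mu sig lam d p :: real
  assumes d: "d > 0" and p: "0 \<le> p" "p \<le> 1" and v: "p * d^2 = sig^2"
    and e: "(p/2) * neg_part (mu - d - t) + (1-p) * neg_part (mu - t) + (p/2) * neg_part (mu + d - t) \<le> lam"
  shows "L_S t lam mu sig \<noteq> {}"
proof -
  define xs where "xs = [(mu-d, p/2), (mu, 1-p), (mu+d, p/2)]"
  have wf: "pmf_of_list_wf xs" using p unfolding xs_def by (intro pmf_of_list_wfI) auto
  define q where "q = pmf_of_list xs"
  define F where "F = distr (measure_pmf q) borel (\<lambda>x. x)"
  have fin: "finite (set_pmf q)" unfolding q_def using wf by (rule finite_set_pmf_of_list)
  have int: "integrable F g" if "g \<in> borel_measurable borel" for g :: "real \<Rightarrow> real"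
    unfolding F_def using that fin by (subst integrable_distr_eq) (auto intro: integrable_measure_pmf_finite)
  have pm1: "pmf q (mu - d) = p/2" unfolding q_def using wf d by (simp add: pmf_pmf_of_list xs_def)
  have pm2: "pmf q mu = 1 - p" unfolding q_def using wf d by (simp add: pmf_pmf_of_list xs_def)
  have pm3: "pmf q (mu + d) = p/2" unfolding q_def using wf d by (simp add: pmf_pmf_of_list xs_def)
  have I: "integral\<^sup>L F g = g (mu - d) * (p/2) + g mu * (1-p) + g (mu + d) * (p/2)"
    if "g \<in> borel_measurable borel" for g :: "real \<Rightarrow> real"
  proof -
    have "integral\<^sup>L F g = integral\<^sup>L (measure_pmf q) g"
      unfolding F_def using that by (subst integral_distr) auto
    also have "\<dots> = (\<Sum>a\<in>{mu-d, mu, mu+d}. g a * pmf q a)"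
      apply (rule integral_measure_pmf_real)
      using set_pmf_of_list[OF wf] unfolding q_def xs_def by auto
    also have "\<dots> = g (mu - d) * (p/2) + g mu * (1-p) + g (mu + d) * (p/2)"
      using d by (simp add: pm1 pm2 pm3)
    finally show ?thesis .
  qed
  have M: "measure F A = (\<Sum>x\<leftarrow>filter (\<lambda>x. fst x \<in> A) xs. snd x)" if "A \<in> sets borel" for A
    unfolding F_def using that wf by (simp add: measure_distr measure_pmf_of_list q_def)
  have "F \<in> L_S t lam mu sig"
    unfolding L_S_def
  proof (intro CollectI conjI)
    show "prob_space F" unfolding F_def by (rule prob_space.prob_space_distr) (auto simp: measure_pmf.prob_space_axioms)
    show "sets F = sets borel" unfolding F_def by simp
    show "integrable F (\<lambda>x. x)" by (rule int) simp
    show "integrable F (\<lambda>x. x^2)" by (rule int) simp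
    show "integrable F (\<lambda>x. neg_part (x - t))" by (rule int) (simp add: neg_part_def)
    show "integral\<^sup>L F (\<lambda>x. x) = mu" by (subst I) (auto simp: field_simps)
    show "integral\<^sup>L F (\<lambda>x. x^2) = mu^2 + sig^2" using v by (subst I) (auto simp: field_simps power2_eq_square)
    show "integral\<^sup>L F (\<lambda>x. neg_part (x - t)) \<le> lam" using e by (subst I) (auto simp: neg_part_def algebra_simps)
    show "symmetric_distr F" unfolding symmetric_distr_def
    proof (intro exI allI)
      fix x
      show "measure F {y. y - mu > x} = measure F {y. y - mu < - x}"
        using d by (subst M, simp, subst M, simp) (auto simp: xs_def)
    qed
  qed
  then show ?thesis by blast
qed

lemma necessity:
  fixes t mu sig lam :: real
  assumes F: "F \<in> L_S t lam mu sig" and tm: "t > mu" and lam: "lam = t - mu" and sig: "sig > 0"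
  shows "sig \<le> t - mu"
proof -
  from F have ps: "prob_space F" and sF: "sets F = sets borel"
    and i1: "integrable F (\<lambda>x. x)" and m1: "(\<integral>x. x \<partial>F) = mu"
    and i2: "integrable F (\<lambda>x. x ^ 2)" and m2: "(\<integral>x. x ^ 2 \<partial>F) = mu ^ 2 + sig ^ 2"
    and sym: "symmetric_distr F"
    and i3: "integrable F (\<lambda>x. neg_part (x - t))" and m3: "(\<integral>x. neg_part (x - t) \<partial>F) \<le> lam"
    unfolding L_S_def by auto
  interpret prob_space F by (rule ps)
  have spF: "space F = UNIV" using sets_eq_imp_space_eq[OF sF] by simp
  have mF: "measurable F borel = measurable borel borel" by (rule measurable_cong_sets) (use sF in auto)
  have eqf: "(\<lambda>x. max (x - t) 0) = (\<lambda>x. neg_part (x - t) + (x - t))"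
    by (auto simp: neg_part_def fun_eq_iff)
  have i4: "integrable F (\<lambda>x. max (x - t) 0)" unfolding eqf using i1 i3 by auto
  have "(\<integral>x. max (x - t) 0 \<partial>F) = (\<integral>x. neg_part (x - t) \<partial>F) + (mu - t)"
    unfolding eqf using i1 i3 m1 by (simp add: Bochner_Integration.integral_add Bochner_Integration.integral_diff prob_space)
  moreover have "(\<integral>x. max (x - t) 0 \<partial>F) \<ge> 0" by (rule integral_nonneg_AE) auto
  ultimately have "(\<integral>x. max (x - t) 0 \<partial>F) = 0" using m3 lam by linarith
  then have "AE x in F. max (x - t) 0 = 0"
    using integral_nonneg_eq_0_iff_AE[OF i4] by auto
  then have ae1: "AE x in F. x \<le> t" by (auto elim!: AE_mp)
  have "{x\<in>space F. \<not> x \<le> t} = {y. t < y}" using spF by auto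
  then have "emeasure F {y. t < y} = 0" using ae1
    by (subst (asm) AE_iff_measurable[where N = "{y. t < y}"]) (auto simp: sF)
  then have z1: "measure F {y. t < y} = 0" by (simp add: measure_def)
  from sym obtain a where a: "\<And>x. measure F {y. y - a > x} = measure F {y. y - a < - x}"
    unfolding symmetric_distr_def by blast
  have ms: "measure F {y. y > c} = measure F {y. y < 2*a - c}" for c
    using a[of "c - a"] by (simp add: algebra_simps)
  have "measure F {y. y < 2*a - t} = 0" using ms[of t] z1 by simp
  then have "emeasure F {y. y < 2*a - t} = 0" by (simp add: emeasure_eq_measure sF)
  then have ae2: "AE x in F. 2*a - t \<le> x"
    using spF by (subst AE_iff_measurable[where N = "{y. y < 2*a - t}"]) (auto simp: sF)
  define G where "G = distr F borel (\<lambda>y. 2*a - y)"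
  have meas: "(\<lambda>y. 2*a - y) \<in> measurable F borel" unfolding mF by simp
  have "F = G"
  proof (rule measure_eqI_lessThan)
    show "sets F = sets borel" by (rule sF)
    show "sets G = sets borel" unfolding G_def by simp
    show "emeasure F {x<..} < \<infinity>" for x using emeasure_finite[of "{x<..}"] by (simp add: less_top[symmetric])
    show "emeasure F {x<..} = emeasure G {x<..}" for x
    proof -
      have "emeasure G {x<..} = emeasure F ((\<lambda>y. 2*a - y) -` {x<..} \<inter> space F)"
        unfolding G_def by (rule emeasure_distr[OF meas]) simp
      also have "(\<lambda>y. 2*a - y) -` {x<..} \<inter> space F = {y. y < 2*a - x}" using spF by auto
      also have "emeasure F {y. y < 2*a - x} = measure F {y. y < 2*a - x}"
        by (simp add: emeasure_eq_measure sF)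
      also have "\<dots> = measure F {y. y > x}" using ms by simp
      also have "\<dots> = emeasure F {x<..}" by (simp add: emeasure_eq_measure sF greaterThan_def)
      finally show ?thesis by simp
    qed
  qed
  have "mu = (\<integral>x. x \<partial>G)" using m1 \<open>F = G\<close> by simp
  also have "\<dots> = (\<integral>y. 2*a - y \<partial>F)" unfolding G_def by (subst integral_distr[OF meas]) auto
  also have "\<dots> = 2*a - mu" using i1 m1 by (simp add: Bochner_Integration.integral_diff prob_space)
  finally have amu: "a = mu" by simp
  have ae3: "AE x in F. 0 \<le> (x - (2*mu - t)) * (t - x)"
    using ae1 ae2
  proof eventually_elim
    case (elim x)
    then show ?case using amu by (intro mult_nonneg_nonneg) auto
  qed
  have eqg: "(\<lambda>x. (x - (2*mu - t)) * (t - x)) = (\<lambda>x. (2*mu) * x - x^2 - (2*mu - t)*t)"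
    by (rule ext) (simp add: power2_eq_square algebra_simps)
  have "0 \<le> (\<integral>x. (x - (2*mu - t)) * (t - x) \<partial>F)" by (rule integral_nonneg_AE[OF ae3])
  also have "\<dots> = 2*mu*mu - (mu^2 + sig^2) - (2*mu - t)*t"
  proof -
    have j1: "integrable F (\<lambda>x. (2*mu) * x)" using i1 by simp
    have j2: "integrable F (\<lambda>x. (2*mu) * x - x^2)" using j1 i2 by (rule Bochner_Integration.integrable_diff)
    have "(\<integral>x. (2*mu) * x - x^2 - (2*mu - t)*t \<partial>F) = (\<integral>x. (2*mu) * x - x^2 \<partial>F) - (2*mu - t)*t"
      using j2 by (subst Bochner_Integration.integral_diff) (auto simp: prob_space)
    also have "(\<integral>x. (2*mu) * x - x^2 \<partial>F) = (\<integral>x. (2*mu) * x \<partial>F) - (\<integral>x. x^2 \<partial>F)"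
      using j1 i2 by (rule Bochner_Integration.integral_diff)
    also have "(\<integral>x. (2*mu) * x \<partial>F) = 2*mu*mu" using m1 by simp
    finally show ?thesis unfolding eqg m2 .
  qed
  finally have h: "0 \<le> 2*mu*mu - (mu^2 + sig^2) - (2*mu - t)*t" .
  have "sig^2 \<le> (t - mu)^2" 
  proof -
    have "(t-mu)^2 - sig^2 = 2*mu*mu - (mu^2+sig^2) - (2*mu - t)*t" by algebra
    then show ?thesis using h by linarith
  qed
  then show ?thesis using power2_le_imp_le[of sig "t - mu"] tm by simp
qed

theorem proposition4:
  fixes t mu sig lam :: real
  assumes "mu > 0" and "sig > 0" and "lam > 0"
    and "lam \<ge> neg_part (mu - t)"
  shows "L_S t lam mu sig \<noteq> {} \<longleftrightarrow>
           (lam > neg_part (mu - t) \<or> (lam = neg_part (mu - t) \<and> sig \<le> t - mu))"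
proof
  assume "L_S t lam mu sig \<noteq> {}"
  then obtain F where F: "F \<in> L_S t lam mu sig" by blast
  show "lam > neg_part (mu - t) \<or> (lam = neg_part (mu - t) \<and> sig \<le> t - mu)"
  proof (cases "lam > neg_part (mu - t)")
    case False
    then have eq: "lam = neg_part (mu - t)" using assms(4) by linarith
    then have tm: "t > mu" and lt: "lam = t - mu" using assms(3) by (auto simp: neg_part_def split: if_splits)
    show ?thesis using necessity[OF F tm lt assms(2)] eq by simp
  qed simp
next
  assume H: "lam > neg_part (mu - t) \<or> (lam = neg_part (mu - t) \<and> sig \<le> t - mu)"
  show "L_S t lam mu sig \<noteq> {}"
  proof (cases "lam > neg_part (mu - t)")
    case True
    define np where "np = neg_part (mu - t)"
    define del where "del = lam - np"
    have del: "del > 0" using True unfolding del_def np_def by simp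
    have np0: "np \<ge> 0" unfolding np_def neg_part_def by simp
    define d where "d = max sig \<bar>t - mu\<bar> + sig^2 / del + 1"
    have sd: "sig^2 / del \<ge> 0" using del by simp
    have d1: "d > \<bar>t - mu\<bar>" "d \<ge> sig" "d > sig^2/del" "d > 0"
      unfolding d_def using sd assms(2) by auto
    define p where "p = sig^2 / d^2"
    have p0: "p \<ge> 0" unfolding p_def by simp
    have "sig^2 \<le> d^2" using d1 assms(2) by (intro power_mono) auto
    then have p1: "p \<le> 1" unfolding p_def using d1 by simp
    have pd: "p * d^2 = sig^2" unfolding p_def using d1 by simp
    have n1: "neg_part (mu - d - t) = t - mu + d" using d1 unfolding neg_part_def by auto
    have n3: "neg_part (mu + d - t) = 0" using d1 unfolding neg_part_def by auto
    have "sig^2 = del * (sig^2/del)" using del by simp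
    also have "\<dots> < del * d" by (rule mult_strict_left_mono[OF d1(3) del])
    finally have "sig^2 / d < del" using d1 by (simp add: divide_less_eq mult.commute)
    moreover have "p * d = sig^2 / d" unfolding p_def using d1 by (simp add: power2_eq_square)
    ultimately have pdl: "p * d < del" by simp
    have b1: "(p/2) * (t - mu + d) \<le> p * d"
    proof -
      have "t - mu + d \<le> 2 * d" using d1 by linarith
      then have "p * (t - mu + d) \<le> p * (2 * d)" using p0 by (rule mult_left_mono)
      then show ?thesis by simp
    qed
    have b2: "(1 - p) * np \<le> np" using p0 np0 by (simp add: algebra_simps)
    show ?thesis
    proof (rule three_point[OF d1(4) p0 p1 pd])
      show "(p/2) * neg_part (mu - d - t) + (1-p) * neg_part (mu - t) + (p/2) * neg_part (mu + d - t) \<le> lam"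
        unfolding n1 n3 np_def[symmetric] using b1 b2 pdl del_def by simp
    qed
  next
    case False
    then have eq: "lam = neg_part (mu - t)" and st: "sig \<le> t - mu" using H by auto
    have n2: "neg_part (mu - t) = t - mu" using st assms(2) unfolding neg_part_def by auto
    have n1: "neg_part (mu - sig - t) = t - mu + sig" using st assms(2) unfolding neg_part_def by auto
    have n3: "neg_part (mu + sig - t) = t - mu - sig" using st assms(2) unfolding neg_part_def by auto
    show ?thesis
    proof (rule three_point[of sig 1])
      show "(1/2) * neg_part (mu - sig - t) + (1-1) * neg_part (mu - t) + (1/2) * neg_part (mu + sig - t) \<le> lam"
        unfolding n1 n3 eq n2 by (simp add: field_simps)
    qed (use assms(2) in auto)
  qed
qed

end
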